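(* With $V$, $\Delta^+$ and $f$ as in the context (type $E_7$), the map $f:\Delta^+\cup\{0\}\to V$ is a bijection.
   Context: Let $F=\{0,1,2,3\}$ be the group $\mathbb{Z}/2\times\mathbb{Z}/2$, with operation $a\oplus b$ given by binary addition without carry; it is a 2-dimensional $\mathbb{Z}/2$-vector space with symplectic form $(a|a')=0$ if $a=0$, $a'=0$ or $a=a'$, and $(a|a')=1$ otherwise. Let $V=F^3$, writing $(a,b,c)$ as $abc$, with coordinatewise $\oplus$ and form $(abc|a'b'c')=(a|a')+(b|b')+(c|c')\in\mathbb{Z}/2$. Let $\Delta$ be the root system of type $E_7$ with simple roots $\alpha_1,\dots,\alpha_7$, where $\langle\alpha_i,\alpha_i\rangle=2$, $\langle\alpha_i,\alpha_j\rangle=-1$ if $\{i,j\}\in\{\{1,3\},\{3,4\},\{4,5\},\{5,6\},\{6,7\},\{2,4\}\}$, and $0$ otherwise. Let $\Lambda=\bigoplus_i\mathbb{Z}\alpha_i$ and $\Delta^+$ the positive roots. Let $f:\Lambda\to V$ be the group homomorphism with $f(\alpha_1)=100$, $f(\alpha_2)=030$, $f(\alpha_3)=300$, $f(\alpha_4)=111$, $f(\alpha_5)=003$, $f(\alpha_6)=001$, $f(\alpha_7)=033$. *)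

theory Defs
  imports Main
begin

text \<open>F is encoded as {0,1,2,3} :: nat with addition = bitwise xor.
  V = F^3 is encoded as triples of such numbers, written abc = (a,b,c).\<close>

definition F_set :: "nat set" where
  "F_set = {0,1,2,3}"

definition V_set :: "(nat \<times> nat \<times> nat) set" where
  "V_set = F_set \<times> F_set \<times> F_set"

definition vxor :: "nat \<times> nat \<times> nat \<Rightarrow> nat \<times> nat \<times> nat \<Rightarrow> nat \<times> nat \<times> nat" where
  "vxor u v = (xor (fst u) (fst v), xor (fst (snd u)) (fst (snd v)), xor (snd (snd u)) (snd (snd v)))"

text \<open>Elements of \<Lambda> = \<Oplus> Z \<alpha>_i are coefficient functions c :: nat \<Rightarrow> int
  with c i = 0 for i outside {1..7}; c stands for \<Sum> c i \<alpha>_i.\<close>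

definition Lambda :: "(nat \<Rightarrow> int) set" where
  "Lambda = {c. \<forall>i. i \<notin> {1..7} \<longrightarrow> c i = 0}"

definition E7_edges :: "(nat \<times> nat) set" where
  "E7_edges = {(1,3),(3,4),(4,5),(5,6),(6,7),(2,4)}"

definition cartan :: "nat \<Rightarrow> nat \<Rightarrow> int" where
  "cartan i j = (if i = j then 2 else if (i,j) \<in> E7_edges \<or> (j,i) \<in> E7_edges then -1 else 0)"

definition form :: "(nat \<Rightarrow> int) \<Rightarrow> (nat \<Rightarrow> int) \<Rightarrow> int" where
  "form c d = (\<Sum>i\<in>{1..7}. \<Sum>j\<in>{1..7}. c i * d j * cartan i j)"

definition sroot :: "nat \<Rightarrow> (nat \<Rightarrow> int)" where
  "sroot i = (\<lambda>j. if j = i then 1 else 0)"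

definition wrefl :: "nat \<Rightarrow> (nat \<Rightarrow> int) \<Rightarrow> (nat \<Rightarrow> int)" where
  "wrefl i \<beta> = (\<lambda>j. \<beta> j - form \<beta> (sroot i) * sroot i j)"

text \<open>The root system \<Delta> is the orbit of the simple roots under the Weyl group,
  i.e. the smallest set containing the simple roots and closed under the simple reflections.\<close>

inductive_set roots_E7 :: "(nat \<Rightarrow> int) set" where
  simple: "i \<in> {1..7} \<Longrightarrow> sroot i \<in> roots_E7"
| reflect: "\<beta> \<in> roots_E7 \<Longrightarrow> i \<in> {1..7} \<Longrightarrow> wrefl i \<beta> \<in> roots_E7"

definition pos_roots_E7 :: "(nat \<Rightarrow> int) set" where
  "pos_roots_E7 = {\<beta> \<in> roots_E7. \<forall>i. 0 \<le> \<beta> i}"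

definition f_simple :: "nat \<Rightarrow> nat \<times> nat \<times> nat" where
  "f_simple i = (if i = 1 then (1,0,0) else if i = 2 then (0,3,0) else if i = 3 then (3,0,0)
     else if i = 4 then (1,1,1) else if i = 5 then (0,0,3) else if i = 6 then (0,0,1)
     else if i = 7 then (0,3,3) else (0,0,0))"

text \<open>Since V has exponent 2, f(\<Sum> c_i \<alpha>_i) = \<Oplus> over i with c_i odd of f(\<alpha>_i).\<close>

fun f_partial :: "(nat \<Rightarrow> int) \<Rightarrow> nat \<Rightarrow> nat \<times> nat \<times> nat" where
  "f_partial c 0 = (0,0,0)"
| "f_partial c (Suc n) = vxor (f_partial c n) (if odd (c (Suc n)) then f_simple (Suc n) else (0,0,0))"

definition fE7 :: "(nat \<Rightarrow> int) \<Rightarrow> nat \<times> nat \<times> nat" where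
  "fE7 c = f_partial c 7"

end

theory Submission
  imports Defs
begin

definition vec :: "int list \<Rightarrow> nat \<Rightarrow> int" where
  "vec xs = (\<lambda>j. if 1 \<le> j \<and> j \<le> 7 then xs ! (j - 1) else 0)"

definition wl :: "nat \<Rightarrow> int list \<Rightarrow> int list" where
  "wl i xs = map (\<lambda>j. xs ! (j - 1) - (\<Sum>k\<leftarrow>[1..<8]. xs ! (k - 1) * cartan k i) * (if j = i then 1 else 0)) [1..<8]"

lemma form_sroot:
  assumes "i \<in> {1..7}"
  shows "form c (sroot i) = (\<Sum>k\<in>{1..7}. c k * cartan k i)"
proof -
  have "form c (sroot i) = (\<Sum>k\<in>{1..7}. \<Sum>j\<in>{1..7}. c k * sroot i j * cartan k j)"
    by (simp add: form_def)
  also have "\<dots> = (\<Sum>k\<in>{1..7}. c k * cartan k i)"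
  proof (rule sum.cong)
    fix k assume "k \<in> {1..7::nat}"
    have "(\<Sum>j\<in>{1..7}. c k * sroot i j * cartan k j) = (\<Sum>j\<in>{1..7}. if j = i then c k * cartan k i else 0)"
      by (rule sum.cong) (auto simp: sroot_def)
    also have "\<dots> = c k * cartan k i" using assms by (simp add: sum.delta)
    finally show "(\<Sum>j\<in>{1..7}. c k * sroot i j * cartan k j) = c k * cartan k i" .
  qed simp
  finally show ?thesis .
qed

lemma sum17: "(\<Sum>k\<in>{1..7::nat}. g k) = (\<Sum>k\<leftarrow>[1..<8]. g k)"
proof -
  have "(\<Sum>k\<leftarrow>[1..<8]. g k) = sum g (set [1..<8])"
    by (rule sum_list_distinct_conv_sum_set) simp
  moreover have "set [1..<8] = {1..7::nat}" by auto
  ultimately show ?thesis by simp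
qed

lemma wl_nth:
  assumes "1 \<le> j" "j \<le> 7"
  shows "wl i xs ! (j - 1) = xs ! (j - 1) - (\<Sum>k\<leftarrow>[1..<8]. xs ! (k - 1) * cartan k i) * (if j = i then 1 else 0)"
proof -
  have l: "j - 1 < length [1..<8::nat]" using assms by simp
  have e: "[1..<8::nat] ! (j - 1) = j" using assms by (simp add: nth_upt)
  show ?thesis unfolding wl_def nth_map[OF l] e ..
qed

lemma wrefl_vec:
  assumes "i \<in> {1..7}" "length xs = 7"
  shows "wrefl i (vec xs) = vec (wl i xs)"
proof (rule ext)
  fix j
  have f: "form (vec xs) (sroot i) = (\<Sum>k\<leftarrow>[1..<8]. xs ! (k - 1) * cartan k i)"
    unfolding form_sroot[OF assms(1)] sum17
    by (auto simp: vec_def intro!: arg_cong[where f=sum_list] map_cong)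
  show "wrefl i (vec xs) j = vec (wl i xs) j"
  proof (cases "1 \<le> j \<and> j \<le> 7")
    case True
    have "vec (wl i xs) j = xs ! (j - 1) - (\<Sum>k\<leftarrow>[1..<8]. xs ! (k - 1) * cartan k i) * (if j = i then 1 else 0)"
      using True wl_nth[of j i xs] by (simp add: vec_def)
    then show ?thesis using True assms unfolding wrefl_def f
      by (simp add: vec_def sroot_def)
  next
    case False
    then have "j \<noteq> i" using assms by auto
    then show ?thesis using False unfolding wrefl_def vec_def sroot_def by auto
  qed
qed

lemma simple_vec: "i \<in> {1..7} \<Longrightarrow> sroot i = vec (map (\<lambda>j. if j = i then 1 else 0) [1..<8])"
  by (rule ext) (auto simp: sroot_def vec_def nth_upt)

definition H :: "int list list list" where "H = [[], [[1,0,0,0,0,0,0], [0,1,0,0,0,0,0], [0,0,1,0,0,0,0], [0,0,0,1,0,0,0], [0,0,0,0,1,0,0], [0,0,0,0,0,1,0], [0,0,0,0,0,0,1]], [[1,0,1,0,0,0,0], [0,1,0,1,0,0,0], [0,0,1,1,0,0,0], [0,0,0,1,1,0,0], [0,0,0,0,1,1,0], [0,0,0,0,0,1,1]], [[1,0,1,1,0,0,0], [0,1,1,1,0,0,0], [0,1,0,1,1,0,0], [0,0,1,1,1,0,0], [0,0,0,1,1,1,0], [0,0,0,0,1,1,1]], [[1,1,1,1,0,0,0], [1,0,1,1,1,0,0], [0,1,1,1,1,0,0], [0,1,0,1,1,1,0], [0,0,1,1,1,1,0], [0,0,0,1,1,1,1]], [[1,1,1,1,1,0,0], [1,0,1,1,1,1,0],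 [0,1,1,2,1,0,0], [0,1,1,1,1,1,0], [0,1,0,1,1,1,1], [0,0,1,1,1,1,1]], [[1,1,1,2,1,0,0], [1,1,1,1,1,1,0], [1,0,1,1,1,1,1], [0,1,1,2,1,1,0], [0,1,1,1,1,1,1]], [[1,1,2,2,1,0,0], [1,1,1,2,1,1,0], [1,1,1,1,1,1,1], [0,1,1,2,2,1,0], [0,1,1,2,1,1,1]], [[1,1,2,2,1,1,0], [1,1,1,2,2,1,0], [1,1,1,2,1,1,1], [0,1,1,2,2,1,1]], [[1,1,2,2,2,1,0], [1,1,2,2,1,1,1], [1,1,1,2,2,1,1], [0,1,1,2,2,2,1]], [[1,1,2,3,2,1,0], [1,1,2,2,2,1,1], [1,1,1,2,2,2,1]], [[1,2,2,3,2,1,0], [1,1,2,3,2,1,1], [1,1,2,2,2,2,1]], [[1,2,2,3,2,1,1], [1,1,2,3,2,2,1]], [[1,2,2,3,2,2,1], [1,1,2,3,3,2,1]], [[1,2,2,3,3,2,1]], [[1,2,2,4,3,2,1]], [[1,2,3,4,3,2,1]], [[2,2,3,4,3,2,1]]]"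

definition PL :: "int list list" where "PL = concat H"

definition NL :: "int list list" where "NL = map (map uminus) PL"

lemma PL_len: "\<forall>xs\<in>set PL. length xs = 7"
  by (simp add: PL_def H_def)

lemma NL_len: "\<forall>xs\<in>set NL. length xs = 7"
  using PL_len by (simp add: NL_def)

definition CM :: "int list list" where "CM = [[2,0,-1,0,0,0,0], [0,2,0,-1,0,0,0], [-1,0,2,-1,0,0,0], [0,-1,-1,2,-1,0,0], [0,0,0,-1,2,-1,0], [0,0,0,0,-1,2,-1], [0,0,0,0,0,-1,2]]"

definition wl2 :: "nat \<Rightarrow> int list \<Rightarrow> int list" where
  "wl2 i xs = (let f = sum_list (map2 (*) xs (CM ! (i - 1))) in map2 (\<lambda>x j. x - f * (if j = i then 1 else 0)) xs [1..<8])"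

lemma wl_eq:
  assumes "i \<in> {1..7}" "length xs = 7"
  shows "wl i xs = wl2 i xs"
proof -
  obtain a b c d e f g where xs: "xs = [a,b,c,d,e,f,g]"
    using assms(2) by (auto simp: length_Suc_conv numeral_eq_Suc)
  have "i = 1 \<or> i = 2 \<or> i = 3 \<or> i = 4 \<or> i = 5 \<or> i = 6 \<or> i = 7" using assms(1) by auto
  then show ?thesis unfolding xs
    by (elim disjE) (simp_all add: wl_def wl2_def CM_def cartan_def E7_edges_def upt_rec)
qed

lemma sum_map2_neg: "sum_list (map2 (*) (map uminus xs) ys) = - sum_list (map2 (*) xs (ys :: int list))"
proof (induction xs arbitrary: ys)
  case Nil then show ?case by simp
next
  case (Cons x xs) then show ?case by (cases ys) auto
qed

lemma wl2_neg: "wl2 i (map uminus xs) = map uminus (wl2 i xs)"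
  unfolding wl2_def Let_def sum_map2_neg by (simp add: zip_map1 case_prod_beta algebra_simps)

definition memb :: "int list \<Rightarrow> bool" where
  "memb xs = (let s = sum_list xs in
     if 0 < s then nat s < length H \<and> xs \<in> set (H ! nat s)
     else 0 < - s \<and> nat (- s) < length H \<and> map uminus xs \<in> set (H ! nat (- s)))"

lemma memb_sound: "memb xs \<Longrightarrow> xs \<in> set PL \<union> set NL"
proof -
  assume m: "memb xs"
  have minus: "map uminus (map uminus xs) = xs" by (simp add: comp_def)
  show ?thesis
  proof (cases "0 < sum_list xs")
    case True
    then have "xs \<in> set (concat H)" using m unfolding memb_def Let_def by auto
    then show ?thesis by (simp add: PL_def)
  next
    case False
    then have "map uminus xs \<in> set (concat H)" using m unfolding memb_def Let_def by auto
    then have "map uminus xs \<in> set PL" by (simp add: PL_def)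
    then have "map uminus (map uminus xs) \<in> set NL" unfolding NL_def set_map by (rule imageI)
    then show ?thesis using minus by simp
  qed
qed

lemma closed_code: "\<forall>xs\<in>set PL. \<forall>i\<in>set [1..<8]. memb (wl2 i xs)"
  by code_simp

lemma closed:
  assumes "xs \<in> set PL \<union> set NL" "i \<in> {1..7}"
  shows "wl2 i xs \<in> set PL \<union> set NL"
proof -
  have i: "i \<in> set [1..<8]" using assms(2) by auto
  show ?thesis
  proof (cases "xs \<in> set PL")
    case True
    then show ?thesis using closed_code i memb_sound by blast
  next
    case False
    then obtain ys where ys: "ys \<in> set PL" "xs = map uminus ys" using assms(1) by (auto simp: NL_def)
    have "wl2 i ys \<in> set PL \<union> set NL" using closed_code i memb_sound ys(1) by blast
    moreover have "wl2 i xs = map uminus (wl2 i ys)" using ys(2) wl2_neg by simp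
    moreover have "\<And>zs. zs \<in> set NL \<Longrightarrow> map uminus zs \<in> set PL"
      by (auto simp: NL_def comp_def)
    ultimately show ?thesis by (auto simp: NL_def)
  qed
qed

lemma roots_sub: "\<beta> \<in> roots_E7 \<Longrightarrow> \<exists>xs\<in>set PL \<union> set NL. \<beta> = vec xs"
proof (induction rule: roots_E7.induct)
  case (simple i)
  then have "i = 1 \<or> i = 2 \<or> i = 3 \<or> i = 4 \<or> i = 5 \<or> i = 6 \<or> i = 7" by auto
  then have "map (\<lambda>j. if j = i then 1 else 0) [1..<8] \<in> set PL"
    by (elim disjE) (simp_all add: PL_def H_def upt_rec)
  then show ?case using simple_vec[OF simple] by blast
next
  case (reflect \<beta> i)
  then obtain xs where xs: "xs \<in> set PL \<union> set NL" "\<beta> = vec xs" by blast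
  have len: "length xs = 7" using xs(1) PL_len NL_len by blast
  have "wl2 i xs \<in> set PL \<union> set NL" using closed xs(1) reflect by blast
  moreover have "wrefl i \<beta> = vec (wl2 i xs)" using wrefl_vec wl_eq reflect len xs(2) by metis
  ultimately show ?case by blast
qed

lemma PL_roots: "\<forall>xs\<in>set PL. vec xs \<in> roots_E7"
proof -
  have r0: "vec [1,0,0,0,0,0,0] \<in> roots_E7" using roots_E7.simple[of 1] simple_vec[of 1] by (simp add: upt_rec)
  have r1: "vec [0,1,0,0,0,0,0] \<in> roots_E7" using roots_E7.simple[of 2] simple_vec[of 2] by (simp add: upt_rec)
  have r2: "vec [0,0,1,0,0,0,0] \<in> roots_E7" using roots_E7.simple[of 3] simple_vec[of 3] by (simp add: upt_rec)
  have r3: "vec [0,0,0,1,0,0,0] \<in> roots_E7" using roots_E7.simple[of 4] simple_vec[of 4] by (simp add: upt_rec)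
  have r4: "vec [0,0,0,0,1,0,0] \<in> roots_E7" using roots_E7.simple[of 5] simple_vec[of 5] by (simp add: upt_rec)
  have r5: "vec [0,0,0,0,0,1,0] \<in> roots_E7" using roots_E7.simple[of 6] simple_vec[of 6] by (simp add: upt_rec)
  have r6: "vec [0,0,0,0,0,0,1] \<in> roots_E7" using roots_E7.simple[of 7] simple_vec[of 7] by (simp add: upt_rec)
  have r7: "vec [1,0,1,0,0,0,0] \<in> roots_E7" using roots_E7.reflect[OF r2, of 1] by (simp add: wrefl_vec wl_eq wl2_def CM_def upt_rec)
  have r8: "vec [0,1,0,1,0,0,0] \<in> roots_E7" using roots_E7.reflect[OF r3, of 2] by (simp add: wrefl_vec wl_eq wl2_def CM_def upt_rec)
  have r9: "vec [0,0,1,1,0,0,0] \<in> roots_E7" using roots_E7.reflect[OF r3, of 3] by (simp add: wrefl_vec wl_eq wl2_def CM_def upt_rec)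
  have r10: "vec [0,0,0,1,1,0,0] \<in> roots_E7" using roots_E7.reflect[OF r4, of 4] by (simp add: wrefl_vec wl_eq wl2_def CM_def upt_rec)
  have r11: "vec [0,0,0,0,1,1,0] \<in> roots_E7" using roots_E7.reflect[OF r5, of 5] by (simp add: wrefl_vec wl_eq wl2_def CM_def upt_rec)
  have r12: "vec [0,0,0,0,0,1,1] \<in> roots_E7" using roots_E7.reflect[OF r6, of 6] by (simp add: wrefl_vec wl_eq wl2_def CM_def upt_rec)
  have r13: "vec [1,0,1,1,0,0,0] \<in> roots_E7" using roots_E7.reflect[OF r9, of 1] by (simp add: wrefl_vec wl_eq wl2_def CM_def upt_rec)
  have r14: "vec [0,1,1,1,0,0,0] \<in> roots_E7" using roots_E7.reflect[OF r9, of 2] by (simp add: wrefl_vec wl_eq wl2_def CM_def upt_rec)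
  have r15: "vec [0,1,0,1,1,0,0] \<in> roots_E7" using roots_E7.reflect[OF r10, of 2] by (simp add: wrefl_vec wl_eq wl2_def CM_def upt_rec)
  have r16: "vec [0,0,1,1,1,0,0] \<in> roots_E7" using roots_E7.reflect[OF r10, of 3] by (simp add: wrefl_vec wl_eq wl2_def CM_def upt_rec)
  have r17: "vec [0,0,0,1,1,1,0] \<in> roots_E7" using roots_E7.reflect[OF r11, of 4] by (simp add: wrefl_vec wl_eq wl2_def CM_def upt_rec)
  have r18: "vec [0,0,0,0,1,1,1] \<in> roots_E7" using roots_E7.reflect[OF r12, of 5] by (simp add: wrefl_vec wl_eq wl2_def CM_def upt_rec)
  have r19: "vec [1,1,1,1,0,0,0] \<in> roots_E7" using roots_E7.reflect[OF r14, of 1] by (simp add: wrefl_vec wl_eq wl2_def CM_def upt_rec)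
  have r20: "vec [1,0,1,1,1,0,0] \<in> roots_E7" using roots_E7.reflect[OF r16, of 1] by (simp add: wrefl_vec wl_eq wl2_def CM_def upt_rec)
  have r21: "vec [0,1,1,1,1,0,0] \<in> roots_E7" using roots_E7.reflect[OF r16, of 2] by (simp add: wrefl_vec wl_eq wl2_def CM_def upt_rec)
  have r22: "vec [0,1,0,1,1,1,0] \<in> roots_E7" using roots_E7.reflect[OF r17, of 2] by (simp add: wrefl_vec wl_eq wl2_def CM_def upt_rec)
  have r23: "vec [0,0,1,1,1,1,0] \<in> roots_E7" using roots_E7.reflect[OF r17, of 3] by (simp add: wrefl_vec wl_eq wl2_def CM_def upt_rec)
  have r24: "vec [0,0,0,1,1,1,1] \<in> roots_E7" using roots_E7.reflect[OF r18, of 4] by (simp add: wrefl_vec wl_eq wl2_def CM_def upt_rec)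
  have r25: "vec [1,1,1,1,1,0,0] \<in> roots_E7" using roots_E7.reflect[OF r21, of 1] by (simp add: wrefl_vec wl_eq wl2_def CM_def upt_rec)
  have r26: "vec [1,0,1,1,1,1,0] \<in> roots_E7" using roots_E7.reflect[OF r23, of 1] by (simp add: wrefl_vec wl_eq wl2_def CM_def upt_rec)
  have r27: "vec [0,1,1,2,1,0,0] \<in> roots_E7" using roots_E7.reflect[OF r21, of 4] by (simp add: wrefl_vec wl_eq wl2_def CM_def upt_rec)
  have r28: "vec [0,1,1,1,1,1,0] \<in> roots_E7" using roots_E7.reflect[OF r23, of 2] by (simp add: wrefl_vec wl_eq wl2_def CM_def upt_rec)
  have r29: "vec [0,1,0,1,1,1,1] \<in> roots_E7" using roots_E7.reflect[OF r24, of 2] by (simp add: wrefl_vec wl_eq wl2_def CM_def upt_rec)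
  have r30: "vec [0,0,1,1,1,1,1] \<in> roots_E7" using roots_E7.reflect[OF r24, of 3] by (simp add: wrefl_vec wl_eq wl2_def CM_def upt_rec)
  have r31: "vec [1,1,1,2,1,0,0] \<in> roots_E7" using roots_E7.reflect[OF r27, of 1] by (simp add: wrefl_vec wl_eq wl2_def CM_def upt_rec)
  have r32: "vec [1,1,1,1,1,1,0] \<in> roots_E7" using roots_E7.reflect[OF r28, of 1] by (simp add: wrefl_vec wl_eq wl2_def CM_def upt_rec)
  have r33: "vec [1,0,1,1,1,1,1] \<in> roots_E7" using roots_E7.reflect[OF r30, of 1] by (simp add: wrefl_vec wl_eq wl2_def CM_def upt_rec)
  have r34: "vec [0,1,1,2,1,1,0] \<in> roots_E7" using roots_E7.reflect[OF r28, of 4] by (simp add: wrefl_vec wl_eq wl2_def CM_def upt_rec)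
  have r35: "vec [0,1,1,1,1,1,1] \<in> roots_E7" using roots_E7.reflect[OF r30, of 2] by (simp add: wrefl_vec wl_eq wl2_def CM_def upt_rec)
  have r36: "vec [1,1,2,2,1,0,0] \<in> roots_E7" using roots_E7.reflect[OF r31, of 3] by (simp add: wrefl_vec wl_eq wl2_def CM_def upt_rec)
  have r37: "vec [1,1,1,2,1,1,0] \<in> roots_E7" using roots_E7.reflect[OF r34, of 1] by (simp add: wrefl_vec wl_eq wl2_def CM_def upt_rec)
  have r38: "vec [1,1,1,1,1,1,1] \<in> roots_E7" using roots_E7.reflect[OF r35, of 1] by (simp add: wrefl_vec wl_eq wl2_def CM_def upt_rec)
  have r39: "vec [0,1,1,2,2,1,0] \<in> roots_E7" using roots_E7.reflect[OF r34, of 5] by (simp add: wrefl_vec wl_eq wl2_def CM_def upt_rec)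
  have r40: "vec [0,1,1,2,1,1,1] \<in> roots_E7" using roots_E7.reflect[OF r35, of 4] by (simp add: wrefl_vec wl_eq wl2_def CM_def upt_rec)
  have r41: "vec [1,1,2,2,1,1,0] \<in> roots_E7" using roots_E7.reflect[OF r37, of 3] by (simp add: wrefl_vec wl_eq wl2_def CM_def upt_rec)
  have r42: "vec [1,1,1,2,2,1,0] \<in> roots_E7" using roots_E7.reflect[OF r39, of 1] by (simp add: wrefl_vec wl_eq wl2_def CM_def upt_rec)
  have r43: "vec [1,1,1,2,1,1,1] \<in> roots_E7" using roots_E7.reflect[OF r40, of 1] by (simp add: wrefl_vec wl_eq wl2_def CM_def upt_rec)
  have r44: "vec [0,1,1,2,2,1,1] \<in> roots_E7" using roots_E7.reflect[OF r40, of 5] by (simp add: wrefl_vec wl_eq wl2_def CM_def upt_rec)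
  have r45: "vec [1,1,2,2,2,1,0] \<in> roots_E7" using roots_E7.reflect[OF r42, of 3] by (simp add: wrefl_vec wl_eq wl2_def CM_def upt_rec)
  have r46: "vec [1,1,2,2,1,1,1] \<in> roots_E7" using roots_E7.reflect[OF r43, of 3] by (simp add: wrefl_vec wl_eq wl2_def CM_def upt_rec)
  have r47: "vec [1,1,1,2,2,1,1] \<in> roots_E7" using roots_E7.reflect[OF r44, of 1] by (simp add: wrefl_vec wl_eq wl2_def CM_def upt_rec)
  have r48: "vec [0,1,1,2,2,2,1] \<in> roots_E7" using roots_E7.reflect[OF r44, of 6] by (simp add: wrefl_vec wl_eq wl2_def CM_def upt_rec)
  have r49: "vec [1,1,2,3,2,1,0] \<in> roots_E7" using roots_E7.reflect[OF r45, of 4] by (simp add: wrefl_vec wl_eq wl2_def CM_def upt_rec)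
  have r50: "vec [1,1,2,2,2,1,1] \<in> roots_E7" using roots_E7.reflect[OF r47, of 3] by (simp add: wrefl_vec wl_eq wl2_def CM_def upt_rec)
  have r51: "vec [1,1,1,2,2,2,1] \<in> roots_E7" using roots_E7.reflect[OF r48, of 1] by (simp add: wrefl_vec wl_eq wl2_def CM_def upt_rec)
  have r52: "vec [1,2,2,3,2,1,0] \<in> roots_E7" using roots_E7.reflect[OF r49, of 2] by (simp add: wrefl_vec wl_eq wl2_def CM_def upt_rec)
  have r53: "vec [1,1,2,3,2,1,1] \<in> roots_E7" using roots_E7.reflect[OF r50, of 4] by (simp add: wrefl_vec wl_eq wl2_def CM_def upt_rec)
  have r54: "vec [1,1,2,2,2,2,1] \<in> roots_E7" using roots_E7.reflect[OF r51, of 3] by (simp add: wrefl_vec wl_eq wl2_def CM_def upt_rec)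
  have r55: "vec [1,2,2,3,2,1,1] \<in> roots_E7" using roots_E7.reflect[OF r53, of 2] by (simp add: wrefl_vec wl_eq wl2_def CM_def upt_rec)
  have r56: "vec [1,1,2,3,2,2,1] \<in> roots_E7" using roots_E7.reflect[OF r54, of 4] by (simp add: wrefl_vec wl_eq wl2_def CM_def upt_rec)
  have r57: "vec [1,2,2,3,2,2,1] \<in> roots_E7" using roots_E7.reflect[OF r56, of 2] by (simp add: wrefl_vec wl_eq wl2_def CM_def upt_rec)
  have r58: "vec [1,1,2,3,3,2,1] \<in> roots_E7" using roots_E7.reflect[OF r56, of 5] by (simp add: wrefl_vec wl_eq wl2_def CM_def upt_rec)
  have r59: "vec [1,2,2,3,3,2,1] \<in> roots_E7" using roots_E7.reflect[OF r58, of 2] by (simp add: wrefl_vec wl_eq wl2_def CM_def upt_rec)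
  have r60: "vec [1,2,2,4,3,2,1] \<in> roots_E7" using roots_E7.reflect[OF r59, of 4] by (simp add: wrefl_vec wl_eq wl2_def CM_def upt_rec)
  have r61: "vec [1,2,3,4,3,2,1] \<in> roots_E7" using roots_E7.reflect[OF r60, of 3] by (simp add: wrefl_vec wl_eq wl2_def CM_def upt_rec)
  have r62: "vec [2,2,3,4,3,2,1] \<in> roots_E7" using roots_E7.reflect[OF r61, of 1] by (simp add: wrefl_vec wl_eq wl2_def CM_def upt_rec)
  note r0 r1 r2 r3 r4 r5 r6 r7 r8 r9 r10 r11 r12 r13 r14 r15 r16 r17 r18 r19 r20 r21 r22 r23 r24 r25 r26 r27 r28 r29 r30 r31 r32 r33 r34 r35 r36 r37 r38 r39 r40 r41 r42 r43 r44 r45 r46 r47 r48 r49 r50 r51 r52 r53 r54 r55 r56 r57 r58 r59 r60 r61 r62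
  then show ?thesis by (simp add: PL_def H_def)
qed

lemma NL_neg: "\<forall>xs\<in>set NL. \<exists>j\<in>set [1..<8]. vec xs j < 0"
  by code_simp

lemma PL_nonneg: "\<forall>xs\<in>set PL. \<forall>j\<in>set [1..<8]. 0 \<le> vec xs j"
  by code_simp

lemma pos_eq: "pos_roots_E7 = vec ` set PL"
proof
  show "pos_roots_E7 \<subseteq> vec ` set PL"
  proof
    fix \<beta> assume b: "\<beta> \<in> pos_roots_E7"
    then obtain xs where xs: "xs \<in> set PL \<union> set NL" "\<beta> = vec xs"
      using roots_sub unfolding pos_roots_E7_def by blast
    have "xs \<notin> set NL"
    proof
      assume "xs \<in> set NL"
      then obtain j where j: "vec xs j < 0" using NL_neg by blast
      have "0 \<le> \<beta> j" using b unfolding pos_roots_E7_def by blast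
      then show False using j xs(2) by simp
    qed
    then show "\<beta> \<in> vec ` set PL" using xs by blast
  qed
next
  show "vec ` set PL \<subseteq> pos_roots_E7"
  proof
    fix \<beta> assume "\<beta> \<in> vec ` set PL"
    then obtain xs where xs: "xs \<in> set PL" "\<beta> = vec xs" by blast
    have "\<forall>j. 0 \<le> vec xs j"
    proof
      fix j
      show "0 \<le> vec xs j"
      proof (cases "j \<in> set [1..<8]")
        case True then show ?thesis using PL_nonneg xs(1) by blast
      next
        case False then show ?thesis by (auto simp: vec_def)
      qed
    qed
    then show "\<beta> \<in> pos_roots_E7" using PL_roots xs unfolding pos_roots_E7_def by blast
  qed
qed

definition ZPL :: "int list list" where "ZPL = replicate 7 0 # PL"

lemma ZPL_distinct: "distinct (map (fE7 \<circ> vec) ZPL)"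
  by code_simp

lemma ZPL_image: "set (map (fE7 \<circ> vec) ZPL) = V_set"
  by code_simp

theorem mainTheorem5:
  shows "bij_betw fE7 (pos_roots_E7 \<union> {(\<lambda>_. 0)}) V_set"
proof -
  have z: "(\<lambda>_. 0) = vec (replicate 7 0)" by (auto simp: vec_def fun_eq_iff nth_replicate)
  have S: "pos_roots_E7 \<union> {(\<lambda>_. 0)} = vec ` set ZPL"
    unfolding pos_eq z ZPL_def by auto
  have inj: "inj_on (fE7 \<circ> vec) (set ZPL)" using ZPL_distinct by (simp add: distinct_map)
  have "inj_on fE7 (vec ` set ZPL)" by (rule inj_on_imageI[OF inj])
  moreover have "fE7 ` vec ` set ZPL = V_set" using ZPL_image by (simp add: image_comp)
  ultimately show ?thesis unfolding S bij_betw_def by blast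
qed

end
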